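(* In the errorless symmetric relay network described in the context, the greedy policy $G$ is optimal for minimizing the average sum AoI at the destination nodes: for every horizon $T\ge1$, $G$ minimizes $\frac{1}{TK}\sum_{t=1}^T\sum_{k=1}^K h_k^{\pi}(t)$ over all policies $\pi$. Furthermore, for every time slot $t$, $G$ minimizes the instantaneous sums $\frac1K\sum_{k=1}^K h_k^{\pi}(t)$ and $\frac1K\sum_{k=1}^K g_k^{\pi}(t)$ over all policies $\pi$.
   Context: Fix integers $K\ge 2$ and $S,U$ with $1\le S<K$, $1\le U<K$, and $S=U$. There are $K$ processes indexed by $k\in\{1,\dots,K\}$ and time slots $t=1,2,\dots$. The state at time $t$ consists of relay AoI values $g_k(t)$ and destination AoI values $h_k(t)$, with $g_k(1)=h_k(1)=1$ for all $k$. A policy $\pi$ is a map assigning to the current state a pair $(\mathcal{S}^{\pi}(t),\mathcal{U}^{\pi}(t))$ of subsets of $\{1,\dots,K\}$ with $|\mathcal{S}^{\pi}(t)|=S$ and $|\mathcal{U}^{\pi}(t)|=U$. Errorless dynamics: $g_k(t+1)=1$ if $k\in\mathcal{S}(t)$, else $g_k(t+1)=g_k(t)+1$; $h_k(t+1)=g_k(t)+1$ if $k\in\mathcal{U}(t)$, else $h_k(t+1)=h_k(t)+1$. Write $g_k^\pi(t),h_k^\pi(t)$ for the sequences under $\pi$. The greedy policy $G$ chooses at each time $t$ a set $\mathcal{S}^G(t)$ of $S$ indices with the largest values $g_k(t)$ (i.e. maximizing $\sum_{k\in\mathcal{S}}g_k(t)$ over $|\mathcal{S}|=S$) and a set $\mathcal{U}^G(t)$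 of $U$ indices with the largest gaps $h_k(t)-g_k(t)$ (i.e. maximizing $\sum_{k\in\mathcal{U}}(h_k(t)-g_k(t))$ over $|\mathcal{U}|=U$). *)

theory Defs
  imports "HOL-Analysis.Analysis"
begin

text \<open>State of the network: relay AoI g and destination AoI h, as functions of the
process index k (only indices 1..K are meaningful).\<close>
type_synonym state = "(nat \<Rightarrow> nat) \<times> (nat \<Rightarrow> nat)"

text \<open>A policy maps the current state to the pair (scheduled sampling set, scheduled update set).\<close>
type_synonym policy = "state \<Rightarrow> nat set \<times> nat set"

definition valid_policy :: "nat \<Rightarrow> nat \<Rightarrow> nat \<Rightarrow> policy \<Rightarrow> bool" where
  "valid_policy K S U \<pi> \<longleftrightarrow>
     (\<forall>st. fst (\<pi> st) \<subseteq> {1..K} \<and> card (fst (\<pi> st)) = S \<and>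
           snd (\<pi> st) \<subseteq> {1..K} \<and> card (snd (\<pi> st)) = U)"

definition step :: "nat set \<Rightarrow> nat set \<Rightarrow> state \<Rightarrow> state" where
  "step Ss Us st =
     ((\<lambda>k. if k \<in> Ss then 1 else fst st k + 1),
      (\<lambda>k. if k \<in> Us then fst st k + 1 else snd st k + 1))"

text \<open>traj \<pi> n is the state at time slot t = n + 1 (so traj \<pi> 0 is the state at t = 1).\<close>
fun traj :: "policy \<Rightarrow> nat \<Rightarrow> state" where
  "traj \<pi> 0 = ((\<lambda>k. 1), (\<lambda>k. 1))"
| "traj \<pi> (Suc n) = step (fst (\<pi> (traj \<pi> n))) (snd (\<pi> (traj \<pi> n))) (traj \<pi> n)"

definition gAoI :: "policy \<Rightarrow> nat \<Rightarrow> nat \<Rightarrow> nat" where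
  "gAoI \<pi> k t = fst (traj \<pi> (t - 1)) k"

definition hAoI :: "policy \<Rightarrow> nat \<Rightarrow> nat \<Rightarrow> nat" where
  "hAoI \<pi> k t = snd (traj \<pi> (t - 1)) k"

text \<open>A greedy policy: at every state, the sampling set consists of S indices with the largest
relay AoI (maximizes the sum of g over all S-subsets of {1..K}), and the update set of U indices
with the largest gaps h - g (ties broken arbitrarily).\<close>
definition greedy_policy :: "nat \<Rightarrow> nat \<Rightarrow> nat \<Rightarrow> policy \<Rightarrow> bool" where
  "greedy_policy K S U G \<longleftrightarrow> valid_policy K S U G \<and>
     (\<forall>st. (\<forall>A. A \<subseteq> {1..K} \<and> card A = S \<longrightarrow>
               (\<Sum>k\<in>A. real (fst st k)) \<le> (\<Sum>k\<in>fst (G st). real (fst st k))) \<and>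
           (\<forall>A. A \<subseteq> {1..K} \<and> card A = U \<longrightarrow>
               (\<Sum>k\<in>A. real (snd st k) - real (fst st k))
                 \<le> (\<Sum>k\<in>snd (G st). real (snd st k) - real (fst st k))))"

end

theory Submission
  imports Defs
begin

lemma traj_fst_Suc: "fst (traj p (Suc n)) k = (if k \<in> fst (p (traj p n)) then 1 else fst (traj p n) k + 1)"
  by (simp add: step_def)

lemma traj_snd_Suc: "snd (traj p (Suc n)) k = (if k \<in> snd (p (traj p n)) then fst (traj p n) k + 1 else snd (traj p n) k + 1)"
  by (simp add: step_def)

lemma g_pos: "fst (traj p n) k \<ge> 1"
  by (cases n) (auto simp: step_def)

lemma g_le: "fst (traj p n) k \<le> Suc n"
  by (induction n) (auto simp: step_def)

lemma g_le_h: "fst (traj p n) k \<le> snd (traj p n) k"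
  by (induction n) (auto simp: step_def)

lemma h_ge: "snd (traj p (Suc n)) k \<ge> fst (traj p n) k + 1"
  using g_le_h[of p n k] unfolding traj_snd_Suc by auto

lemma vp_sets: "valid_policy K S U p \<Longrightarrow> fst (p st) \<subseteq> {1..K} \<and> card (fst (p st)) = S \<and>
   snd (p st) \<subseteq> {1..K} \<and> card (snd (p st)) = U"
  unfolding valid_policy_def by blast

lemma gr_S: "greedy_policy K S U G \<Longrightarrow> A \<subseteq> {1..K} \<Longrightarrow> card A = S \<Longrightarrow>
   (\<Sum>k\<in>A. real (fst st k)) \<le> (\<Sum>k\<in>fst (G st). real (fst st k))"
  unfolding greedy_policy_def by blast

lemma gr_U: "greedy_policy K S U G \<Longrightarrow> A \<subseteq> {1..K} \<Longrightarrow> card A = U \<Longrightarrow>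
   (\<Sum>k\<in>A. real (snd st k) - real (fst st k)) \<le> (\<Sum>k\<in>snd (G st). real (snd st k) - real (fst st k))"
  unfolding greedy_policy_def by blast

lemma greedy_h:
  assumes gr: "greedy_policy K S U G" and SU: "S = U"
  shows "snd (traj G (Suc n)) k = fst (traj G n) k + 1"
proof (induction n arbitrary: k)
  case 0
  then show ?case by (simp add: step_def)
next
  case (Suc n)
  define st where "st = traj G (Suc n)"
  define P where "P = fst (G (traj G n))"
  define Q where "Q = snd (G st)"
  have val: "valid_policy K S U G" using gr by (simp add: greedy_policy_def)
  have PI: "P \<subseteq> {1..K}" "card P = S" using vp_sets[OF val] by (auto simp: P_def)
  have QI: "Q \<subseteq> {1..K}" "card Q = U" using vp_sets[OF val] by (auto simp: Q_def)
  have finP: "finite P" using PI finite_subset by blast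
  have finQ: "finite Q" using QI finite_subset by blast
  define d where "d k = real (snd st k) - real (fst st k)" for k
  have dP: "k \<in> P \<Longrightarrow> d k \<ge> 1" for k
    using Suc.IH[of k] g_pos[of G n k] unfolding d_def st_def P_def traj_fst_Suc by simp
  have dnP: "k \<notin> P \<Longrightarrow> d k = 0" for k
    using Suc.IH[of k] unfolding d_def st_def P_def traj_fst_Suc by simp
  have "(\<Sum>k\<in>P. d k) \<le> (\<Sum>k\<in>Q. d k)"
    using gr_U[OF gr PI(1)] PI(2) SU unfolding d_def Q_def by auto
  moreover have "(\<Sum>k\<in>Q. d k) = (\<Sum>k\<in>Q\<inter>P. d k) + (\<Sum>k\<in>Q-P. d k)"
    using finQ by (metis sum.Int_Diff)
  moreover have "(\<Sum>k\<in>Q-P. d k) = 0" using dnP by simp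
  moreover have "(\<Sum>k\<in>P. d k) = (\<Sum>k\<in>P\<inter>Q. d k) + (\<Sum>k\<in>P-Q. d k)"
    using finP by (metis sum.Int_Diff)
  ultimately have le0: "(\<Sum>k\<in>P-Q. d k) \<le> 0" by (simp add: Int_commute)
  have PQ: "P \<subseteq> Q"
  proof (rule ccontr)
    assume "\<not> P \<subseteq> Q"
    then obtain j where j: "j \<in> P - Q" by blast
    have "(\<Sum>k\<in>P-Q. d k) \<ge> (\<Sum>k\<in>P-Q. 1)" using dP by (intro sum_mono) auto
    moreover have "(\<Sum>k\<in>P-Q. (1::real)) = real (card (P-Q))" by simp
    moreover have "card (P - Q) > 0" using j finP by (metis card_gt_0_iff empty_iff finite_Diff)
    ultimately show False using le0 by linarith
  qed
  show ?case
  proof (cases "k \<in> Q")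
    case True
    then show ?thesis unfolding traj_snd_Suc[of G "Suc n"] by (simp add: Q_def st_def)
  next
    case False
    hence "k \<notin> P" using PQ by blast
    then show ?thesis using False Suc.IH[of k]
      unfolding traj_snd_Suc[of G "Suc n"] traj_fst_Suc[of G "Suc n"] traj_fst_Suc[of G n]
      by (simp add: Q_def st_def P_def)
  qed
qed

definition cnt :: "nat \<Rightarrow> (nat \<Rightarrow> nat) \<Rightarrow> nat \<Rightarrow> nat" where
  "cnt K x c = card {k\<in>{1..K}. c \<le> x k}"

lemma greedy_exch:
  assumes gr: "greedy_policy K S U G" and a: "a \<in> fst (G st)" and k: "k \<in> {1..K} - fst (G st)"
  shows "fst st k \<le> fst st a"
proof -
  define A where "A = fst (G st)"
  have val: "valid_policy K S U G" using gr by (simp add: greedy_policy_def)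
  have AI: "A \<subseteq> {1..K}" "card A = S" using vp_sets[OF val] by (auto simp: A_def)
  have finA: "finite A" using AI finite_subset by blast
  define A' where "A' = insert k (A - {a})"
  have A'I: "A' \<subseteq> {1..K}" using AI k unfolding A'_def by auto
  have kA: "k \<notin> A - {a}" using k A_def by auto
  have cA': "card A' = S" using AI finA a kA unfolding A'_def A_def[symmetric]
    by (simp add: card_insert_disjoint) (metis A_def a card_gt_0_iff empty_iff Suc_pred)
  have "(\<Sum>j\<in>A'. real (fst st j)) \<le> (\<Sum>j\<in>A. real (fst st j))"
    using gr_S[OF gr A'I cA'] unfolding A_def by auto
  moreover have "(\<Sum>j\<in>A'. real (fst st j)) = real (fst st k) + (\<Sum>j\<in>A - {a}. real (fst st j))"
    unfolding A'_def using finA kA by simp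
  moreover have "(\<Sum>j\<in>A. real (fst st j)) = real (fst st a) + (\<Sum>j\<in>A - {a}. real (fst st j))"
    using finA a A_def by (metis sum.remove)
  ultimately show ?thesis by simp
qed

lemma cnt_dom:
  assumes gr: "greedy_policy K S U G" and vp: "valid_policy K S U p"
  shows "cnt K (fst (traj G n)) c \<le> cnt K (fst (traj p n)) c"
proof (induction n arbitrary: c)
  case 0
  then show ?case by (simp add: cnt_def)
next
  case (Suc n)
  define x where "x = fst (traj G n)"
  define y where "y = fst (traj p n)"
  define A where "A = fst (G (traj G n))"
  define B where "B = fst (p (traj p n))"
  have val: "valid_policy K S U G" using gr by (simp add: greedy_policy_def)
  have AI: "A \<subseteq> {1..K}" "card A = S" using vp_sets[OF val] by (auto simp: A_def)
  have BI: "B \<subseteq> {1..K}" "card B = S" using vp_sets[OF vp] by (auto simp: B_def)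
  have finA: "finite A" using AI finite_subset by blast
  have finB: "finite B" using BI finite_subset by blast
  show ?case
  proof (cases "c \<le> 1")
    case True
    have e: "{k\<in>{1..K}. c \<le> fst (traj q (Suc n)) k} = {1..K}" for q
      using True g_pos[of q "Suc n"] le_trans by blast
    have "cnt K (fst (traj G (Suc n))) c = K" "cnt K (fst (traj p (Suc n))) c = K"
      unfolding cnt_def e by simp_all
    then show ?thesis by simp
  next
    case False
    then obtain d where c: "c = Suc d" and d: "d \<ge> 1" by (cases c) auto
    define X where "X = {k\<in>{1..K}. d \<le> x k}"
    define Y where "Y = {k\<in>{1..K}. d \<le> y k}"
    have eqG: "{k\<in>{1..K}. c \<le> fst (traj G (Suc n)) k} = X - A"
      unfolding X_def A_def x_def traj_fst_Suc c using d by auto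
    have eqp: "{k\<in>{1..K}. c \<le> fst (traj p (Suc n)) k} = Y - B"
      unfolding Y_def B_def y_def traj_fst_Suc c using d by auto
    have XY: "card X \<le> card Y" using Suc.IH[of d] unfolding cnt_def X_def Y_def x_def y_def .
    have "card (X - A) \<le> card (Y - B)"
    proof (cases "X - A = {}")
      case True then show ?thesis by (metis card.empty zero_le)
    next
      case False
      then obtain k where k: "k \<in> X - A" by blast
      have "A \<subseteq> X"
      proof
        fix a assume a: "a \<in> A"
        have "x k \<le> x a" using greedy_exch[OF gr, of a "traj G n" k] a k
          unfolding A_def x_def X_def by auto
        then show "a \<in> X" using k a AI unfolding X_def by auto
      qed
      hence "card (X - A) = card X - S" using finA AI by (simp add: card_Diff_subset)
      also have "\<dots> \<le> card Y - card B" using XY BI by simp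
      also have "\<dots> \<le> card (Y - B)" by (rule diff_card_le_card_Diff) (simp add: finB)
      finally show ?thesis .
    qed
    then show ?thesis unfolding cnt_def eqG eqp .
  qed
qed

lemma layer:
  assumes "\<And>k. x k \<le> M"
  shows "(\<Sum>k=1..K. x k) = (\<Sum>c=1..M. cnt K x c)"
proof -
  have "x k = (\<Sum>c=1..M. if c \<le> x k then 1 else 0)" for k
  proof -
    have "(\<Sum>c=1..M. if c \<le> x k then (1::nat) else 0) = card {c\<in>{1..M}. c \<le> x k}"
      by (simp add: sum.If_cases Int_def conj_commute)
    also have "{c\<in>{1..M}. c \<le> x k} = {1..x k}" using assms[of k] by auto
    finally show ?thesis by simp
  qed
  hence "(\<Sum>k=1..K. x k) = (\<Sum>k=1..K. \<Sum>c=1..M. if c \<le> x k then 1 else 0)" by simp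
  also have "\<dots> = (\<Sum>c=1..M. \<Sum>k=1..K. if c \<le> x k then 1 else 0)" by (rule sum.swap)
  also have "\<dots> = (\<Sum>c=1..M. cnt K x c)" unfolding cnt_def by (simp add: sum.If_cases Int_def conj_commute)
  finally show ?thesis .
qed

lemma g_sum_le:
  assumes gr: "greedy_policy K S U G" and vp: "valid_policy K S U p"
  shows "(\<Sum>k=1..K. fst (traj G n) k) \<le> (\<Sum>k=1..K. fst (traj p n) k)"
proof -
  have "(\<Sum>k=1..K. fst (traj G n) k) = (\<Sum>c=1..Suc n. cnt K (fst (traj G n)) c)"
    by (rule layer) (rule g_le)
  also have "\<dots> \<le> (\<Sum>c=1..Suc n. cnt K (fst (traj p n)) c)"
    by (rule sum_mono) (rule cnt_dom[OF gr vp])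
  also have "\<dots> = (\<Sum>k=1..K. fst (traj p n) k)"
    by (rule layer[symmetric]) (rule g_le)
  finally show ?thesis .
qed

lemma h_sum_le:
  assumes gr: "greedy_policy K S U G" and vp: "valid_policy K S U p" and SU: "S = U"
  shows "(\<Sum>k=1..K. snd (traj G n) k) \<le> (\<Sum>k=1..K. snd (traj p n) k)"
proof (cases n)
  case 0 then show ?thesis by simp
next
  case (Suc m)
  have "(\<Sum>k=1..K. snd (traj G n) k) = (\<Sum>k=1..K. fst (traj G m) k + 1)"
    unfolding Suc using greedy_h[OF gr SU] by simp
  also have "\<dots> = (\<Sum>k=1..K. fst (traj G m) k) + K" by (subst sum.distrib) simp
  also have "\<dots> \<le> (\<Sum>k=1..K. fst (traj p m) k) + K" using g_sum_le[OF gr vp] by simp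
  also have "\<dots> = (\<Sum>k=1..K. fst (traj p m) k + 1)" by (subst sum.distrib) simp
  also have "\<dots> \<le> (\<Sum>k=1..K. snd (traj p n) k)" unfolding Suc by (rule sum_mono) (rule h_ge)
  finally show ?thesis .
qed

theorem theorem2:
  fixes K S U :: nat and G :: policy
  assumes "K \<ge> 2" and "1 \<le> S" and "S < K" and "1 \<le> U" and "U < K" and "S = U"
    and "greedy_policy K S U G"
  shows "\<forall>\<pi>. valid_policy K S U \<pi> \<longrightarrow>
           (\<forall>T\<ge>1. (\<Sum>t=1..T. \<Sum>k=1..K. real (hAoI G k t)) / (real T * real K)
                  \<le> (\<Sum>t=1..T. \<Sum>k=1..K. real (hAoI \<pi> k t)) / (real T * real K)) \<and>
           (\<forall>t\<ge>1. (\<Sum>k=1..K. real (hAoI G k t)) / real K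
                  \<le> (\<Sum>k=1..K. real (hAoI \<pi> k t)) / real K) \<and>
           (\<forall>t\<ge>1. (\<Sum>k=1..K. real (gAoI G k t)) / real K
                  \<le> (\<Sum>k=1..K. real (gAoI \<pi> k t)) / real K)"
proof (intro allI impI)
  fix p assume vp: "valid_policy K S U p"
  have hr: "(\<Sum>k=1..K. real (hAoI G k t)) \<le> (\<Sum>k=1..K. real (hAoI p k t))" for t
  proof -
    have "(\<Sum>k=1..K. hAoI G k t) \<le> (\<Sum>k=1..K. hAoI p k t)"
      unfolding hAoI_def by (rule h_sum_le[OF assms(7) vp assms(6)])
    then show ?thesis by (metis of_nat_le_iff of_nat_sum)
  qed
  have gr: "(\<Sum>k=1..K. real (gAoI G k t)) \<le> (\<Sum>k=1..K. real (gAoI p k t))" for t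
  proof -
    have "(\<Sum>k=1..K. gAoI G k t) \<le> (\<Sum>k=1..K. gAoI p k t)"
      unfolding gAoI_def by (rule g_sum_le[OF assms(7) vp])
    then show ?thesis by (metis of_nat_le_iff of_nat_sum)
  qed
  have Kp: "real K > 0" using assms(1) by simp
  show "(\<forall>T\<ge>1. (\<Sum>t=1..T. \<Sum>k=1..K. real (hAoI G k t)) / (real T * real K)
                  \<le> (\<Sum>t=1..T. \<Sum>k=1..K. real (hAoI p k t)) / (real T * real K)) \<and>
           (\<forall>t\<ge>1. (\<Sum>k=1..K. real (hAoI G k t)) / real K
                  \<le> (\<Sum>k=1..K. real (hAoI p k t)) / real K) \<and>
           (\<forall>t\<ge>1. (\<Sum>k=1..K. real (gAoI G k t)) / real K
                  \<le> (\<Sum>k=1..K. real (gAoI p k t)) / real K)"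
  proof (intro conjI allI impI)
    fix T :: nat assume "T \<ge> 1"
    hence pos: "real T * real K > 0" using Kp by simp
    have "(\<Sum>t=1..T. \<Sum>k=1..K. real (hAoI G k t)) \<le> (\<Sum>t=1..T. \<Sum>k=1..K. real (hAoI p k t))"
      by (rule sum_mono) (rule hr)
    then show "(\<Sum>t=1..T. \<Sum>k=1..K. real (hAoI G k t)) / (real T * real K)
                  \<le> (\<Sum>t=1..T. \<Sum>k=1..K. real (hAoI p k t)) / (real T * real K)"
      using pos by (simp add: divide_right_mono)
  next
    fix t :: nat
    show "(\<Sum>k=1..K. real (hAoI G k t)) / real K \<le> (\<Sum>k=1..K. real (hAoI p k t)) / real K"
      using hr[of t] Kp by (simp add: divide_right_mono)
  next
    fix t :: nat
    show "(\<Sum>k=1..K. real (gAoI G k t)) / real K \<le> (\<Sum>k=1..K. real (gAoI p k t)) / real K"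
      using gr[of t] Kp by (simp add: divide_right_mono)
  qed
qed

end
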